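(* Let ${\rm d}\ge4$ and consider a static spherically symmetric charged fluid with metric $ds^2=-W(r)^2dt^2+U(r)^2dr^2+r^2d\Omega_{{\rm d}-2}$ for $r\le\mathfrak a$, in which $W^2=a(-\epsilon\sqrt{G_{\rm d}}\phi+b)^2+c$ with constants $a>0,b,c$ and $\epsilon\in\{1,-1\}$, joined at $r=\mathfrak a$ to the exterior Tangherlini (Reissner–Nordström) metric $ds^2=-f(r)dt^2+f(r)^{-1}dr^2+r^2d\Omega_{{\rm d}-2}$, $f(r)=1-\frac{2G_{\rm d}}{{\rm d}-3}\frac{m}{r^{{\rm d}-3}}+\frac{G_{\rm d}}{({\rm d}-3)^2}\frac{q^2}{r^{2({\rm d}-3)}}$, with $q\neq0$, such that $W(\mathfrak a)^2=1/U(\mathfrak a)^2=f(\mathfrak a)$, $W'(\mathfrak a)=f'(\mathfrak a)/(2W(\mathfrak a))$, and the interior charge function $Q(r)=r^{{\rm d}-2}\phi'(r)/(W U)$ satisfies $Q(\mathfrak a)=q$. Then $ac=a\left[1-\frac{G_{\rm d}m^2}{q^2}\right]+(a-1)\left(\frac{m}{q}-\frac{q}{({\rm d}-3)\mathfrak a^{{\rm d}-3}}\right)^2G_{\rm d}$.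
   Context: $d\Omega_{{\rm d}-2}$ is the round metric on the unit sphere $\mathbf S^{{\rm d}-2}$; $G_{\rm d}>0$ is the ${\rm d}$-dimensional gravitational constant; $\phi(r)$ is the electrostatic potential ($A_\mu=-\phi\delta^0_\mu$); primes denote $d/dr$. The function $Q(r)$ is the charge enclosed within radius $r$ obtained by integrating the Maxwell equation, and $m,q$ are the mass and charge parameters of the exterior solution. *)

theory Defs
  imports "HOL-Analysis.Analysis"
begin

definition tangherlini_f :: "real \<Rightarrow> nat \<Rightarrow> real \<Rightarrow> real \<Rightarrow> real \<Rightarrow> real" where
  "tangherlini_f G d m q r =
     1 - (2 * G / (real d - 3)) * (m / r ^ (d - 3))
       + (G / (real d - 3)^2) * (q^2 / r ^ (2 * (d - 3)))"

definition charge_Q :: "nat \<Rightarrow> (real \<Rightarrow> real) \<Rightarrow> (real \<Rightarrow> real) \<Rightarrow> (real \<Rightarrow> real) \<Rightarrow> real \<Rightarrow> real" where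
  "charge_Q d dphi W U r = r ^ (d - 2) * dphi r / (W r * U r)"

end

theory Submission
  imports Defs
begin

theorem mainTheorem15:
  fixes d :: nat and G a b c \<epsilon> m q R :: real
    and W U \<phi> dW d\<phi> :: "real \<Rightarrow> real"
  assumes hd: "d \<ge> 4"
    and hG: "G > 0"
    and ha: "a > 0"
    and heps: "\<epsilon> = 1 \<or> \<epsilon> = -1"
    and hq: "q \<noteq> 0"
    and hR: "R > 0"
    and hWpos: "\<forall>r\<in>{0<..R}. W r > 0"
    and hUpos: "\<forall>r\<in>{0<..R}. U r > 0"
    and hWder: "\<forall>r\<in>{0<..R}. (W has_real_derivative dW r) (at r within {0<..R})"
    and h\<phi>der: "\<forall>r\<in>{0<..R}. (\<phi> has_real_derivative d\<phi> r) (at r within {0<..R})"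
    and hW2: "\<forall>r\<in>{0<..R}. (W r)^2 = a * (- \<epsilon> * sqrt G * \<phi> r + b)^2 + c"
    and hmatch1: "(W R)^2 = tangherlini_f G d m q R"
    and hmatch2: "1 / (U R)^2 = tangherlini_f G d m q R"
    and hmatch3: "dW R = deriv (tangherlini_f G d m q) R / (2 * W R)"
    and hcharge: "charge_Q d d\<phi> W U R = q"
  shows "a * c = a * (1 - G * m^2 / q^2)
           + (a - 1) * (m / q - q / ((real d - 3) * R ^ (d - 3)))^2 * G"
proof -
  define S where "S = {0<..R}"
  define n where "n = d - 3"
  have n1: "n \<ge> 1" using hd by (simp add: n_def)
  have kn: "real d - 3 = real n" using hd by (simp add: n_def)
  define x where "x = R ^ n"
  have xpos: "x > 0" using hR by (simp add: x_def)
  have RS: "R \<in> S" using hR by (simp add: S_def)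
  have nb: "at R within S \<noteq> bot"
    using hR by (simp add: S_def trivial_limit_within islimpt_Ioc)
  define f where "f = tangherlini_f G d m q"
  have fform: "f = (\<lambda>r. 1 - (2 * G / real n) * (m / r ^ n) + (G / (real n)^2) * (q^2 / r ^ (2 * n)))"
    by (auto simp: f_def tangherlini_f_def kn n_def)
  obtain j where nj: "n = Suc j" using n1 by (cases n) auto
  define fd where "fd = 2*G*m/(R*x) - 2*G*q^2/(real n*R*x^2)"
  have fder: "(f has_real_derivative fd) (at R)"
  proof -
    have "(f has_real_derivative (- (2 * G / real n) * (- (m * (real n * R^j)) / (R^n * R^n))
          + (G / (real n)^2) * (- (q^2 * (real (2*n) * R^(2*n - 1))) / (R^(2*n) * R^(2*n))))) (at R)"
      unfolding fform using hR nj
      by (auto intro!: derivative_eq_intros simp del: power_Suc)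
    moreover have "(- (2 * G / real n) * (- (m * (real n * R^j)) / (R^n * R^n))
          + (G / (real n)^2) * (- (q^2 * (real (2*n) * R^(2*n - 1))) / (R^(2*n) * R^(2*n)))) = fd"
    proof -
      have e1: "R^n = R * R^j" using nj by simp
      have e2: "R^(2*n-1) = R^n * R^j" using nj by (simp add: power_add[symmetric] mult_2)
      have e3: "R^(2*n) = R^n * R^n" by (simp add: power_add[symmetric] mult_2)
      show ?thesis unfolding fd_def x_def e2 e3 using hR n1 e1
        by (simp add: field_simps power2_eq_square)
    qed
    ultimately show ?thesis by simp
  qed
  have dfR: "deriv f R = fd" using fder by (rule DERIV_imp_deriv)
  have WR: "W R > 0" and UR: "U R > 0" using hWpos hUpos hR by auto
  have fR: "f R = (W R)^2" using hmatch1 by (simp add: f_def)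
  have "(W R * U R)^2 = 1" using hmatch2 hmatch1 UR by (simp add: power_mult_distrib field_simps)
  hence WU: "W R * U R = 1" using WR UR
  proof -
    assume h: "(W R * U R)^2 = 1"
    have "W R * U R > 0" using WR UR by simp
    thus ?thesis using h power2_eq_1_iff[of "W R * U R"] by auto
  qed
  have "d - 2 = Suc n" using hd by (simp add: n_def)
  hence Rd2: "R ^ (d - 2) = R * x" unfolding x_def by simp
  have dphi: "d\<phi> R = q / (R * x)"
    using hcharge WU hR xpos by (simp add: charge_Q_def Rd2 field_simps)
  define psi where "psi = - \<epsilon> * sqrt G * \<phi> R + b"
  have d1: "((\<lambda>r. (W r)^2) has_real_derivative 2 * W R * dW R) (at R within S)"
    using hWder RS by (auto simp: S_def intro!: derivative_eq_intros)
  have d2: "((\<lambda>r. a * (- \<epsilon> * sqrt G * \<phi> r + b)^2 + c) has_real_derivative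
      a * (2 * psi * (- \<epsilon> * sqrt G * d\<phi> R))) (at R within S)"
    using h\<phi>der RS by (auto simp: S_def psi_def intro!: derivative_eq_intros)
  have d1': "((\<lambda>r. a * (- \<epsilon> * sqrt G * \<phi> r + b)^2 + c) has_real_derivative 2 * W R * dW R) (at R within S)"
    by (rule has_field_derivative_transform_within[OF d1 zero_less_one RS]) (use hW2 in \<open>auto simp: S_def\<close>)
  have eqd: "2 * W R * dW R = a * (2 * psi * (- \<epsilon> * sqrt G * d\<phi> R))"
    using vector_derivative_unique_within[OF nb d1'[unfolded has_real_derivative_iff_has_vector_derivative]
        d2[unfolded has_real_derivative_iff_has_vector_derivative]] .
  have "2 * W R * dW R = fd" using hmatch3 dfR WR by (simp add: f_def)
  hence A1: "W R * dW R * (R * x^2 * real n) = G * m * x * real n - G * q^2"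
    using hR xpos n1 unfolding fd_def by (simp add: field_simps power2_eq_square)
  have A2: "W R * dW R * (R * x) = - a * \<epsilon> * sqrt G * psi * q"
    using eqd dphi hR xpos by (simp add: field_simps)
  have "W R * dW R * (R * x^2 * real n) = (W R * dW R * (R * x)) * (x * real n)"
    by (simp add: power2_eq_square)
  hence A3: "G * m * x * real n - G * q^2 = - a * \<epsilon> * sqrt G * psi * q * (x * real n)"
    using A1 A2 by simp
  have key: "G * (m - q^2/(real n * x)) = - a * \<epsilon> * sqrt G * psi * q"
  proof -
    have "G * (m - q^2/(real n * x)) = (G * m * x * real n - G * q^2) / (x * real n)"
      using xpos n1 by (simp add: field_simps)
    also have "\<dots> = - a * \<epsilon> * sqrt G * psi * q" unfolding A3 using xpos n1 by simp
    finally show ?thesis .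
  qed
  have e2: "\<epsilon>^2 = 1" using heps by auto
  have sG: "(sqrt G)^2 = G" using hG by simp
  define y where "y = m / q - q / (real n * x)"
  have ky: "G * y * q = - a * \<epsilon> * sqrt G * psi * q"
  proof -
    have "y * q = m - q^2/(real n * x)" unfolding y_def using hq by (simp add: field_simps power2_eq_square)
    hence "G * y * q = G * (m - q^2/(real n * x))" by (metis mult.assoc)
    thus ?thesis using key by simp
  qed
  hence ky2: "G * y = - a * \<epsilon> * sqrt G * psi" using hq
    by (metis mult_right_cancel mult_minus_left)
  hence "(G * y)^2 = a^2 * G * psi^2" using e2 sG by (simp add: power_mult_distrib)
  hence psi2: "a * psi^2 = G * y^2 / a" using hG ha by (simp add: field_simps power2_eq_square)
  have cR: "c = f R - a * psi^2" using hW2 hR fR by (auto simp: psi_def)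
  have fRv: "f R = 1 - G*m^2/q^2 + G*y^2"
    unfolding fform y_def x_def using hq hR n1
    by (simp add: field_simps power2_eq_square power_mult[symmetric] mult.commute[of 2 n] power_mult)
  have yx: "m/q - q/(real n * R^(d-3)) = y" unfolding y_def x_def n_def by simp
  show ?thesis unfolding kn yx cR fRv psi2
    using ha by (simp add: field_simps)
qed

end
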